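(* Let $M\in\mathrm{SL}(n,\mathbb{Z})$ and suppose that for some integer $k\ge1$ the characteristic polynomial of $M^k$ is reducible over $\mathbb{Z}$. Then either the Galois group of the characteristic polynomial of $M$ (acting on its $n$ roots) is imprimitive, or the characteristic polynomial of $M$ is cyclotomic (all its roots are roots of unity).
   Context: A permutation group acting on a set $\Omega$ of size $n$ is called imprimitive if it preserves some partition of $\Omega$ other than the partition into singletons and the partition with the single block $\Omega$ (in particular, an intransitive group is imprimitive in this sense). *)

theory Defs
  imports "Jordan_Normal_Form.Char_Poly" "HOL-Library.Disjoint_Sets"
begin

definition is_subfield :: "complex set \<Rightarrow> bool" where
  "is_subfield F \<longleftrightarrow> 0 \<in> F \<and> 1 \<in> F \<and>
     (\<forall>x\<in>F. \<forall>y\<in>F. x + y \<in> F \<and> x - y \<in> F \<and> x * y \<in> F) \<and>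
     (\<forall>x\<in>F. inverse x \<in> F)"

definition croots :: "int poly \<Rightarrow> complex set" where
  "croots p = {z. poly (map_poly complex_of_int p) z = 0}"

definition splitting_field :: "int poly \<Rightarrow> complex set" where
  "splitting_field p = \<Inter> {F. is_subfield F \<and> croots p \<subseteq> F}"

definition field_aut :: "complex set \<Rightarrow> (complex \<Rightarrow> complex) \<Rightarrow> bool" where
  "field_aut K s \<longleftrightarrow> bij_betw s K K \<and>
     (\<forall>x\<in>K. \<forall>y\<in>K. s (x + y) = s x + s y \<and> s (x * y) = s x * s y)"

text \<open>The n roots of p counted with multiplicity: pairs (root, copy index).\<close>
definition root_slots :: "int poly \<Rightarrow> (complex \<times> nat) set" where
  "root_slots p = {(z, j). z \<in> croots p \<and> j < order z (map_poly complex_of_int p)}"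

text \<open>The Galois group of p, as permutations of its n roots (with multiplicity).\<close>
definition galois_perms :: "int poly \<Rightarrow> ((complex \<times> nat) \<Rightarrow> (complex \<times> nat)) set" where
  "galois_perms p = {(\<lambda>(z, j). (s z, j)) | s. field_aut (splitting_field p) s}"

definition imprimitive :: "'a set \<Rightarrow> ('a \<Rightarrow> 'a) set \<Rightarrow> bool" where
  "imprimitive \<Omega> G \<longleftrightarrow> (\<exists>P. partition_on \<Omega> P \<and> P \<noteq> (\<lambda>x. {x}) ` \<Omega> \<and> P \<noteq> {\<Omega>} \<and>
      (\<forall>g\<in>G. \<forall>B\<in>P. g ` B \<in> P))"

definition cyclotomic_poly :: "int poly \<Rightarrow> bool" where
  "cyclotomic_poly p \<longleftrightarrow> (\<forall>z\<in>croots p. \<exists>m>0. z ^ m = 1)"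

end

theory Submission
  imports Defs "Jordan_Normal_Form.Schur_Decomposition"
begin


lemma ut_mult:
  fixes A B :: "'a :: comm_ring_1 mat"
  assumes A: "A \<in> carrier_mat n n" and B: "B \<in> carrier_mat n n"
    and uA: "upper_triangular A" and uB: "upper_triangular B"
  shows "upper_triangular (A * B) \<and> (\<forall>i<n. (A * B) $$ (i,i) = A $$ (i,i) * B $$ (i,i))"
proof (intro conjI allI impI)
  show "upper_triangular (A * B)"
  proof (rule upper_triangularI)
    fix i j assume ji: "j < i" and i: "i < dim_row (A * B)"
    hence "i < n" using A by auto
    have "(A * B) $$ (i, j) = (\<Sum>l<n. A $$ (i,l) * B $$ (l,j))"
      using A B \<open>i < n\<close> ji by (simp add: scalar_prod_def atLeast0LessThan)
    also have "\<dots> = 0"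
    proof (rule sum.neutral, intro ballI)
      fix l assume "l \<in> {..<n}"
      show "A $$ (i,l) * B $$ (l,j) = 0"
      proof (cases "l < i")
        case True thus ?thesis using uA A \<open>i < n\<close> by (auto simp: upper_triangular_def)
      next
        case False hence "j < l" using ji by auto
        thus ?thesis using uB B \<open>l \<in> {..<n}\<close> by (auto simp: upper_triangular_def)
      qed
    qed
    finally show "(A * B) $$ (i, j) = 0" .
  qed
next
  fix i assume i: "i < n"
  have "(A * B) $$ (i, i) = (\<Sum>l<n. A $$ (i,l) * B $$ (l,i))"
    using A B i by (simp add: scalar_prod_def atLeast0LessThan)
  also have "\<dots> = A $$ (i,i) * B $$ (i,i)"
  proof -
    have "(\<Sum>l<n. A $$ (i, l) * B $$ (l, i)) = A $$ (i, i) * B $$ (i, i) + (\<Sum>l\<in>{..<n}-{i}. A $$ (i, l) * B $$ (l, i))"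
      using i by (subst sum.remove[of _ i], auto)
    also have "(\<Sum>l\<in>{..<n}-{i}. A $$ (i, l) * B $$ (l, i)) = 0"
    proof (rule sum.neutral, intro ballI)
      fix l assume l: "l \<in> {..<n}-{i}"
      show "A $$ (i,l) * B $$ (l,i) = 0"
      proof (cases "l < i")
        case True thus ?thesis using uA A i by (auto simp: upper_triangular_def)
      next
        case False hence "i < l" using l by auto
        thus ?thesis using uB B l by (auto simp: upper_triangular_def)
      qed
    qed
    finally show ?thesis by simp
  qed
  finally show "(A * B) $$ (i, i) = A $$ (i,i) * B $$ (i,i)" .
qed

lemma ut_pow:
  fixes A :: "'a :: comm_ring_1 mat"
  assumes A: "A \<in> carrier_mat n n" and uA: "upper_triangular A"
  shows "upper_triangular (A ^\<^sub>m k) \<and> (\<forall>i<n. (A ^\<^sub>m k) $$ (i,i) = A $$ (i,i) ^ k)"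
proof (induction k)
  case 0
  then show ?case using A by auto
next
  case (Suc k)
  have "A ^\<^sub>m k \<in> carrier_mat n n" using A by simp
  from ut_mult[OF this A _ uA] Suc show ?case by simp
qed

lemma matrix_facts:
  fixes M :: "int mat"
  assumes M: "M \<in> carrier_mat n n" and d: "det M = 1"
  shows "\<exists>L. map_poly (of_int :: int \<Rightarrow> complex) (char_poly M) = (\<Prod>a\<leftarrow>L. [:-a,1:])
     \<and> map_poly (of_int :: int \<Rightarrow> complex) (char_poly (M ^\<^sub>m k)) = (\<Prod>a\<leftarrow>L. [:-(a^k),1:])
     \<and> prod_list L = 1 \<and> length L = n"
proof -
  define A where "A = map_mat (of_int :: int \<Rightarrow> complex) M"
  have A: "A \<in> carrier_mat n n" using M by (simp add: A_def)
  have h1: "map_poly (of_int :: int \<Rightarrow> complex) (char_poly M) = char_poly A"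
    unfolding A_def by (rule of_int_hom.char_poly_hom[OF M, symmetric])
  have Mk: "M ^\<^sub>m k \<in> carrier_mat n n" using M by simp
  have h2: "map_poly (of_int :: int \<Rightarrow> complex) (char_poly (M ^\<^sub>m k)) = char_poly (A ^\<^sub>m k)"
    unfolding A_def of_int_hom.mat_hom_pow[OF M, symmetric] by (rule of_int_hom.char_poly_hom[OF Mk, symmetric])
  obtain L where cL: "char_poly A = (\<Prod>a\<leftarrow>L. [:-a,1:])" and len: "length L = n"
    using char_poly_factorized[OF A] by blast
  obtain B P Q where sd: "schur_decomposition A L = (B,P,Q)" by (cases "schur_decomposition A L") auto
  from schur_decomposition[OF A cL sd] have wit: "similar_mat_wit A B P Q"
    and uB: "upper_triangular B" and dB: "diag_mat B = L" by auto
  from similar_mat_witD2[OF A wit] have B: "B \<in> carrier_mat n n" by auto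
  have "similar_mat (A ^\<^sub>m k) (B ^\<^sub>m k)"
    using similar_mat_wit_pow[OF wit] unfolding similar_mat_def by blast
  hence "char_poly (A ^\<^sub>m k) = char_poly (B ^\<^sub>m k)" by (rule char_poly_similar)
  also have "\<dots> = (\<Prod>a\<leftarrow>diag_mat (B ^\<^sub>m k). [:-a,1:])"
    using ut_pow[OF B uB, of k] B by (intro char_poly_upper_triangular[of _ n]) auto
  also have "diag_mat (B ^\<^sub>m k) = map (\<lambda>a. a^k) L"
    unfolding dB[symmetric] using ut_pow[OF B uB, of k] B
    by (auto simp: diag_mat_def list_eq_iff_nth_eq)
  finally have h3: "char_poly (A ^\<^sub>m k) = (\<Prod>a\<leftarrow>L. [:-(a^k),1:])"
    by (simp add: comp_def)
  have "det A = 1" unfolding A_def of_int_hom.hom_det d by simp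
  moreover have "similar_mat A B" using wit unfolding similar_mat_def by blast
  ultimately have "det B = 1" using det_similar by metis
  hence "prod_list L = 1" using det_upper_triangular[OF uB B] dB by simp
  thus ?thesis using h1 h2 h3 cL len by auto
qed



lemma order_linear_prod:
  "Polynomial.order z (\<Prod>a\<leftarrow>L. [:-a,1:]) = count_list L (z::complex)"
proof (induction L)
  case Nil
  then show ?case by (simp add: order_0I)
next
  case (Cons x L)
  have nz: "(\<Prod>a\<leftarrow>L. [:-a,1:]) \<noteq> (0::complex poly)"
    by (auto simp: prod_list_zero_iff)
  have nz1: "[:-x,1:] \<noteq> (0::complex poly)" by simp
  have nz2: "[:-x,1:] * (\<Prod>a\<leftarrow>L. [:-a,1:]) \<noteq> (0::complex poly)"
    by (rule no_zero_divisors[OF nz1 nz])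
  have "Polynomial.order z [:-x,1:] = (if z = x then 1 else 0)"
  proof (cases "z = x")
    case True thus ?thesis using order_power_n_n[of x 1] by simp
  next
    case False thus ?thesis by (simp add: order_0I)
  qed
  thus ?case using order_mult[OF nz2, of z] Cons by simp
qed

lemma poly_linear_prod_0:
  "poly (\<Prod>a\<leftarrow>L. [:-a,1:]) (z::complex) = 0 \<longleftrightarrow> z \<in> set L"
  by (induction L) auto

lemma order_ge_pderiv:
  fixes p :: "complex poly"
  assumes "p \<noteq> 0"
  shows "m \<le> Polynomial.order a p \<longleftrightarrow> (\<forall>i<m. poly ((pderiv ^^ i) p) a = 0)"
  using assms
proof (induction m arbitrary: p)
  case 0
  then show ?case by simp
next
  case (Suc m)
  show ?case
  proof
    assume h: "Suc m \<le> Polynomial.order a p"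
    hence r: "poly p a = 0" using Suc.prems order_root by fastforce
    have o: "Polynomial.order a p = Suc (Polynomial.order a (pderiv p))" by (rule order_pderiv[OF Suc.prems r])
    show "\<forall>i<Suc m. poly ((pderiv ^^ i) p) a = 0"
    proof (cases "m = 0")
      case True thus ?thesis using r by auto
    next
      case False
      have "pderiv p \<noteq> 0"
      proof
        assume "pderiv p = 0"
        then obtain c where "p = [:c:]" using pderiv_iszero by blast
        thus False using r Suc.prems by simp
      qed
      from Suc.IH[OF this] h o have "\<forall>i<m. poly ((pderiv ^^ i) (pderiv p)) a = 0" by simp
      thus ?thesis using r
        by (auto simp: less_Suc_eq_0_disj funpow_Suc_right simp del: funpow.simps)
    qed
  next
    assume h: "\<forall>i<Suc m. poly ((pderiv ^^ i) p) a = 0"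
    hence r: "poly p a = 0" by (metis funpow_0 zero_less_Suc)
    have o: "Polynomial.order a p = Suc (Polynomial.order a (pderiv p))" by (rule order_pderiv[OF Suc.prems r])
    show "Suc m \<le> Polynomial.order a p"
    proof (cases "m = 0")
      case True thus ?thesis using o by simp
    next
      case False
      have "pderiv p \<noteq> 0"
      proof
        assume "pderiv p = 0"
        then obtain c where "p = [:c:]" using pderiv_iszero by blast
        thus False using r Suc.prems by simp
      qed
      moreover have "\<forall>i<m. poly ((pderiv ^^ i) (pderiv p)) a = 0"
        using h by (auto simp: funpow_Suc_right simp del: funpow.simps)
      ultimately have "m \<le> Polynomial.order a (pderiv p)" using Suc.IH by blast
      thus ?thesis using o by simp
    qed
  qed
qed

lemma splitting_field_props:
  fixes p :: "int poly"
  defines "K \<equiv> splitting_field p"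
  shows "croots p \<subseteq> K" "0 \<in> K" "1 \<in> K"
    "\<And>x y. x \<in> K \<Longrightarrow> y \<in> K \<Longrightarrow> x + y \<in> K"
    "\<And>x y. x \<in> K \<Longrightarrow> y \<in> K \<Longrightarrow> x - y \<in> K"
    "\<And>x y. x \<in> K \<Longrightarrow> y \<in> K \<Longrightarrow> x * y \<in> K"
  unfolding K_def splitting_field_def is_subfield_def by auto

lemma K_int_poly:
  fixes p :: "int poly"
  assumes KD: "K = splitting_field p"
    and s: "field_aut K s"
  shows "s 0 = 0" "s 1 = 1" "\<And>c. of_int c \<in> K" "\<And>c. s (of_int c) = of_int c"
    "\<And>x m. x \<in> K \<Longrightarrow> x ^ m \<in> K \<and> s (x ^ m) = s x ^ m"
    "\<And>w (a :: int poly). w \<in> K \<Longrightarrow>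
        poly (map_poly of_int a) w \<in> K \<and> s (poly (map_poly of_int a) w) = poly (map_poly of_int a) (s w)"
    "\<And>x y. x \<in> K \<Longrightarrow> y \<in> K \<Longrightarrow> s x = s y \<longleftrightarrow> x = y"
proof -
  note KP = splitting_field_props[where p=p, folded KD]
  have K0: "0 \<in> K" and K1: "1 \<in> K" using KP by auto
  have Ka: "\<And>x y. x \<in> K \<Longrightarrow> y \<in> K \<Longrightarrow> x + y \<in> K"
    and Ks: "\<And>x y. x \<in> K \<Longrightarrow> y \<in> K \<Longrightarrow> x - y \<in> K"
    and Km: "\<And>x y. x \<in> K \<Longrightarrow> y \<in> K \<Longrightarrow> x * y \<in> K" using KP by auto
  have add: "\<And>x y. x \<in> K \<Longrightarrow> y \<in> K \<Longrightarrow> s (x + y) = s x + s y"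
   and mul: "\<And>x y. x \<in> K \<Longrightarrow> y \<in> K \<Longrightarrow> s (x * y) = s x * s y"
   and inj: "inj_on s K"
    using s unfolding field_aut_def bij_betw_def by auto
  show s0: "s 0 = 0" using add[OF K0 K0] by simp
  have "s 1 = s 1 * s 1" using mul[OF K1 K1] by simp
  moreover have "s 1 \<noteq> 0" using inj K0 K1 s0 by (metis inj_on_def zero_neq_one)
  ultimately show s1: "s 1 = 1" by (metis mult_cancel_right1)
  show eq: "\<And>x y. x \<in> K \<Longrightarrow> y \<in> K \<Longrightarrow> s x = s y \<longleftrightarrow> x = y"
    using inj by (auto simp: inj_on_def)
  have neg: "- x \<in> K \<and> s (- x) = - s x" if "x \<in> K" for x
  proof -
    have mx: "- x \<in> K" using Ks[OF K0 that] by simp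
    have "s (x + - x) = s 0" by simp
    hence "s x + s (- x) = 0" using add[OF that mx] s0 by simp
    thus ?thesis using mx by (simp add: eq_neg_iff_add_eq_0 add.commute)
  qed
  have nat: "of_nat m \<in> K \<and> s (of_nat m) = of_nat m" for m
    by (induction m) (auto simp: s0 K0 K1 add s1 Ka)
  show ofi: "\<And>c. of_int c \<in> K" "\<And>c. s (of_int c) = of_int c"
  proof -
    fix c :: int
    show "of_int c \<in> K"
      using nat[of "nat c"] nat[of "nat (-c)"] neg[of "of_nat (nat (-c))"]
      by (cases "c \<ge> 0") auto
    show "s (of_int c) = of_int c"
      using nat[of "nat c"] nat[of "nat (-c)"] neg[of "of_nat (nat (-c))"]
      by (cases "c \<ge> 0") auto
  qed
  show pw: "\<And>x m. x \<in> K \<Longrightarrow> x ^ m \<in> K \<and> s (x ^ m) = s x ^ m"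
  proof -
    fix x m assume x: "x \<in> K"
    show "x ^ m \<in> K \<and> s (x ^ m) = s x ^ m"
      by (induction m) (auto simp: K1 s1 Km x mul)
  qed
  show "\<And>w (a :: int poly). w \<in> K \<Longrightarrow>
        poly (map_poly of_int a) w \<in> K \<and> s (poly (map_poly of_int a) w) = poly (map_poly of_int a) (s w)"
  proof -
    fix w and a :: "int poly" assume w: "w \<in> K"
    show "poly (map_poly of_int a) w \<in> K \<and> s (poly (map_poly of_int a) w) = poly (map_poly of_int a) (s w)"
    proof (induction a)
      case 0
      then show ?case by (simp add: K0 s0)
    next
      case (pCons c a)
      have e: "map_poly (of_int :: int \<Rightarrow> complex) (pCons c a) = pCons (of_int c) (map_poly of_int a)"
        by (rule of_int_hom.map_poly_pCons_hom)
      let ?P = "poly (map_poly of_int a) w"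
      have P: "?P \<in> K" using pCons.IH by simp
      have wP: "w * ?P \<in> K" by (rule Km[OF w P])
      have "s (of_int c + w * ?P) = s (of_int c) + s (w * ?P)" by (rule add[OF ofi(1) wP])
      also have "\<dots> = of_int c + s w * s ?P" using mul[OF w P] ofi(2) by simp
      finally show ?case unfolding e using pCons.IH Ka[OF ofi(1) wP] by simp
    qed
  qed
qed


lemma galois_action:
  fixes p :: "int poly" and L :: "complex list"
  assumes pL: "map_poly of_int p = (\<Prod>a\<leftarrow>L. [:-a,1:])" and g: "g \<in> galois_perms p"
  obtains s where "g = (\<lambda>(z,j). (s z, j))" "s ` set L = set L"
    "\<forall>z\<in>set L. count_list L (s z) = count_list L z"
    "\<forall>x\<in>set L. \<forall>y\<in>set L. \<forall>m. s x ^ m = s y ^ m \<longleftrightarrow> x ^ m = y ^ m"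
    "\<forall>x\<in>set L. \<forall>(a::int poly) m. poly (map_poly of_int a) (s x ^ m) = 0 \<longleftrightarrow> poly (map_poly of_int a) (x ^ m) = 0"
proof -
  define K where "K = splitting_field p"
  note KP = splitting_field_props[where p=p, folded K_def]
  from g obtain s where gs: "g = (\<lambda>(z,j). (s z, j))" and s: "field_aut K s"
    unfolding galois_perms_def K_def by blast
  note SP = K_int_poly[OF K_def s]
  have cr: "croots p = set L" unfolding croots_def pL poly_linear_prod_0 by simp
  have LK: "set L \<subseteq> K" using KP(1) cr by simp
  have sK: "s ` K = K" using s unfolding field_aut_def bij_betw_def by auto
  have zero_iff: "\<And>w (a::int poly). w \<in> K \<Longrightarrow>
     poly (map_poly of_int a) (s w) = 0 \<longleftrightarrow> poly (map_poly of_int a) w = 0"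
  proof -
    fix w and a :: "int poly" assume w: "w \<in> K"
    have e: "poly (map_poly of_int a) (s w) = s (poly (map_poly of_int a) w)" using SP(6)[OF w] by simp
    have P: "poly (map_poly of_int a) w \<in> K" using SP(6)[OF w] by simp
    have "poly (map_poly of_int a) (s w) = 0 \<longleftrightarrow> s (poly (map_poly of_int a) w) = s 0"
      by (simp add: e SP(1))
    also have "\<dots> \<longleftrightarrow> poly (map_poly of_int a) w = 0"
      by (rule SP(7)[OF P KP(2)])
    finally show "poly (map_poly of_int a) (s w) = 0 \<longleftrightarrow> poly (map_poly of_int a) w = 0" .
  qed
  have into: "s ` set L \<subseteq> set L"
  proof
    fix y assume "y \<in> s ` set L"
    then obtain x where x: "x \<in> set L" "y = s x" by auto
    have "poly (map_poly of_int p) x = 0" using x pL poly_linear_prod_0 by simp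
    hence "poly (map_poly of_int p) (s x) = 0" using zero_iff[of x p] x LK by auto
    thus "y \<in> set L" using x pL poly_linear_prod_0 by simp
  qed
  have inj: "inj_on s (set L)" using SP(7) LK by (auto simp: inj_on_def subset_iff)
  have onto: "s ` set L = set L" by (rule endo_inj_surj[OF finite_set into inj])
  have pnz: "map_poly (of_int :: int \<Rightarrow> complex) p \<noteq> 0" unfolding pL
    by (auto simp: prod_list_zero_iff)
  have cnt: "\<forall>z\<in>set L. count_list L (s z) = count_list L z"
  proof
    fix z assume z: "z \<in> set L"
    hence zK: "z \<in> K" and szK: "s z \<in> K" using LK sK by auto
    have "m \<le> count_list L (s z) \<longleftrightarrow> m \<le> count_list L z" for m
    proof -
      have "m \<le> count_list L (s z) \<longleftrightarrow> (\<forall>i<m. poly ((pderiv ^^ i) (map_poly of_int p)) (s z) = 0)"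
        using order_ge_pderiv[OF pnz] unfolding pL order_linear_prod by simp
      also have "\<dots> \<longleftrightarrow> (\<forall>i<m. poly (map_poly of_int ((pderiv ^^ i) p)) (s z) = 0)"
        by (simp add: of_int_hom.map_poly_higher_pderiv)
      also have "\<dots> \<longleftrightarrow> (\<forall>i<m. poly (map_poly of_int ((pderiv ^^ i) p)) z = 0)"
        using zero_iff[OF zK] by simp
      also have "\<dots> \<longleftrightarrow> (\<forall>i<m. poly ((pderiv ^^ i) (map_poly of_int p)) z = 0)"
        by (simp add: of_int_hom.map_poly_higher_pderiv)
      also have "\<dots> \<longleftrightarrow> m \<le> count_list L z"
        using order_ge_pderiv[OF pnz] unfolding pL order_linear_prod by simp
      finally show ?thesis .
    qed
    thus "count_list L (s z) = count_list L z" by (meson le_antisym order_refl)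
  qed
  have pw: "\<forall>x\<in>set L. \<forall>y\<in>set L. \<forall>m. s x ^ m = s y ^ m \<longleftrightarrow> x ^ m = y ^ m"
  proof (intro ballI allI)
    fix x y m assume "x \<in> set L" "y \<in> set L"
    hence xK: "x \<in> K" and yK: "y \<in> K" using LK by auto
    have ex: "x ^ m \<in> K" "s (x ^ m) = s x ^ m" using SP(5)[OF xK] by auto
    have ey: "y ^ m \<in> K" "s (y ^ m) = s y ^ m" using SP(5)[OF yK] by auto
    have "s x ^ m = s y ^ m \<longleftrightarrow> s (x ^ m) = s (y ^ m)" by (simp only: ex ey)
    also have "\<dots> \<longleftrightarrow> x ^ m = y ^ m" by (rule SP(7)[OF ex(1) ey(1)])
    finally show "s x ^ m = s y ^ m \<longleftrightarrow> x ^ m = y ^ m" .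
  qed
  have pa: "\<forall>x\<in>set L. \<forall>(a::int poly) m. poly (map_poly of_int a) (s x ^ m) = 0 \<longleftrightarrow> poly (map_poly of_int a) (x ^ m) = 0"
  proof (intro ballI allI)
    fix x and a :: "int poly" and m assume "x \<in> set L"
    hence xK: "x \<in> K" using LK by auto
    have "s x ^ m = s (x ^ m)" using SP(5)[OF xK] by simp
    thus "poly (map_poly of_int a) (s x ^ m) = 0 \<longleftrightarrow> poly (map_poly of_int a) (x ^ m) = 0"
      using zero_iff[of "x ^ m" a] SP(5)[OF xK] by simp
  qed
  show ?thesis using that[OF gs onto cnt pw pa] .
qed


lemma imprim_from_fun:
  fixes \<Omega> :: "'a set" and f :: "'a \<Rightarrow> 'b"
  assumes G: "\<And>g. g \<in> G \<Longrightarrow> g ` \<Omega> = \<Omega> \<and> (\<forall>x\<in>\<Omega>. \<forall>y\<in>\<Omega>. f (g x) = f (g y) \<longleftrightarrow> f x = f y)"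
    and ni: "\<not> inj_on f \<Omega>" and x0: "x0 \<in> \<Omega>" and y0: "y0 \<in> \<Omega>" and ne: "f x0 \<noteq> f y0"
  shows "imprimitive \<Omega> G"
proof -
  define blk where "blk x = {y\<in>\<Omega>. f y = f x}" for x
  define P where "P = blk ` \<Omega>"
  have part: "partition_on \<Omega> P"
  proof (rule partition_onI)
    show "\<Union>P = \<Omega>" unfolding P_def blk_def by auto
    show "{} \<notin> P" unfolding P_def blk_def by auto
    fix p q assume "p \<in> P" "q \<in> P" "p \<noteq> q"
    thus "disjnt p q" unfolding P_def blk_def disjnt_def by auto
  qed
  from ni obtain a b where ab: "a \<in> \<Omega>" "b \<in> \<Omega>" "a \<noteq> b" "f a = f b"
    unfolding inj_on_def by blast
  have ns: "P \<noteq> (\<lambda>x. {x}) ` \<Omega>"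
  proof
    assume "P = (\<lambda>x. {x}) ` \<Omega>"
    moreover have "blk a \<in> P" unfolding P_def using ab by auto
    ultimately obtain c where "blk a = {c}" by auto
    moreover have "a \<in> blk a" "b \<in> blk a" unfolding blk_def using ab by auto
    ultimately show False using ab by auto
  qed
  have no: "P \<noteq> {\<Omega>}"
  proof
    assume "P = {\<Omega>}"
    moreover have "blk x0 \<in> P" unfolding P_def using x0 by auto
    ultimately have "blk x0 = \<Omega>" by auto
    hence "y0 \<in> blk x0" using y0 by auto
    thus False using ne unfolding blk_def by auto
  qed
  have inv: "\<forall>g\<in>G. \<forall>B\<in>P. g ` B \<in> P"
  proof (intro ballI)
    fix g B assume g: "g \<in> G" and B: "B \<in> P"
    then obtain x where x: "x \<in> \<Omega>" and Bx: "B = blk x" unfolding P_def by auto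
    from G[OF g] have gO: "g ` \<Omega> = \<Omega>" and gf: "\<forall>x\<in>\<Omega>. \<forall>y\<in>\<Omega>. f (g x) = f (g y) \<longleftrightarrow> f x = f y" by auto
    have gx: "g x \<in> \<Omega>" using gO x by auto
    have "g ` blk x = blk (g x)"
    proof
      show "g ` blk x \<subseteq> blk (g x)" using gO gf x unfolding blk_def by auto
      show "blk (g x) \<subseteq> g ` blk x"
      proof
        fix w assume w: "w \<in> blk (g x)"
        hence "w \<in> g ` \<Omega>" using gO unfolding blk_def by auto
        then obtain y where y: "y \<in> \<Omega>" "w = g y" by auto
        hence "f y = f x" using w gf x unfolding blk_def by auto
        thus "w \<in> g ` blk x" using y unfolding blk_def by auto
      qed
    qed
    thus "g ` B \<in> P" using Bx gx unfolding P_def by auto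
  qed
  show ?thesis unfolding imprimitive_def using part ns no inv by blast
qed


lemma root_slots_eq:
  assumes pL: "map_poly of_int p = (\<Prod>a\<leftarrow>L. [:-a,1:])"
  shows "root_slots p = {(z,j). z \<in> set L \<and> j < count_list L z}"
  unfolding root_slots_def croots_def pL poly_linear_prod_0 order_linear_prod by simp

lemma gperm_props:
  fixes p :: "int poly" and L :: "complex list"
  assumes pL: "map_poly of_int p = (\<Prod>a\<leftarrow>L. [:-a,1:])" and g: "g \<in> galois_perms p"
  shows "g ` root_slots p = root_slots p"
    "\<forall>x\<in>root_slots p. snd (g x) = snd x"
    "\<forall>x\<in>root_slots p. \<forall>y\<in>root_slots p. \<forall>m. fst (g x) ^ m = fst (g y) ^ m \<longleftrightarrow> fst x ^ m = fst y ^ m"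
    "\<forall>x\<in>root_slots p. \<forall>(a::int poly) m. poly (map_poly of_int a) (fst (g x) ^ m) = 0 \<longleftrightarrow> poly (map_poly of_int a) (fst x ^ m) = 0"
proof -
  obtain s where gs: "g = (\<lambda>(z,j). (s z, j))" and onto: "s ` set L = set L"
    and cnt: "\<forall>z\<in>set L. count_list L (s z) = count_list L z"
    and pw: "\<forall>x\<in>set L. \<forall>y\<in>set L. \<forall>m. s x ^ m = s y ^ m \<longleftrightarrow> x ^ m = y ^ m"
    and pa: "\<forall>x\<in>set L. \<forall>(a::int poly) m. poly (map_poly of_int a) (s x ^ m) = 0 \<longleftrightarrow> poly (map_poly of_int a) (x ^ m) = 0"
    using galois_action[OF pL g] by blast
  note O = root_slots_eq[OF pL]
  show "g ` root_slots p = root_slots p"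
  proof
    show "g ` root_slots p \<subseteq> root_slots p" unfolding O gs using onto cnt by auto
    show "root_slots p \<subseteq> g ` root_slots p"
    proof
      fix x assume "x \<in> root_slots p"
      then obtain w j where x: "x = (w,j)" "w \<in> set L" "j < count_list L w" unfolding O by auto
      then obtain z where z: "z \<in> set L" "w = s z" using onto by auto
      have "(z,j) \<in> root_slots p" unfolding O using z x cnt by auto
      moreover have "g (z,j) = x" using gs x z by simp
      ultimately show "x \<in> g ` root_slots p" by force
    qed
  qed
  show "\<forall>x\<in>root_slots p. snd (g x) = snd x" unfolding gs by auto
  show "\<forall>x\<in>root_slots p. \<forall>y\<in>root_slots p. \<forall>m. fst (g x) ^ m = fst (g y) ^ m \<longleftrightarrow> fst x ^ m = fst y ^ m"
    unfolding O gs using pw by auto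
  show "\<forall>x\<in>root_slots p. \<forall>(a::int poly) m. poly (map_poly of_int a) (fst (g x) ^ m) = 0 \<longleftrightarrow> poly (map_poly of_int a) (fst x ^ m) = 0"
    unfolding O gs using pa by auto
qed

lemma count_le1_distinct: "(\<forall>z\<in>set L. count_list L z \<le> 1) \<Longrightarrow> distinct L"
proof (induction L)
  case Nil then show ?case by simp
next
  case (Cons x L)
  have "x \<notin> set L" using Cons.prems count_list_0_iff[of L x] by auto
  moreover have "\<forall>z\<in>set L. count_list L z \<le> 1"
  proof
    fix z assume "z \<in> set L"
    thus "count_list L z \<le> 1" using Cons.prems by (cases "x = z") auto
  qed
  ultimately show ?case using Cons.IH by simp
qed

lemma distinct_count_le1: "distinct L \<Longrightarrow> count_list L z \<le> 1"
  by (induction L) (auto simp: count_list_0_iff)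

lemma distinct_count_eq1: "distinct L \<Longrightarrow> z \<in> set L \<Longrightarrow> count_list L z = 1"
  using distinct_count_le1[of L z] count_list_0_iff[of L z] by linarith

lemma prod_list_pow: "prod_list (map (\<lambda>a. a ^ k) L) = (prod_list L :: complex) ^ k"
  by (induction L) (auto simp: power_mult_distrib)

lemma int_root_linear:
  fixes c :: "int poly"
  assumes d: "degree c = 1" and u: "lead_coeff c dvd 1" and r: "poly (map_poly of_int c) w = (0::complex)"
  shows "\<exists>m::int. w = of_int m"
proof -
  have dm: "degree (map_poly (of_int :: int \<Rightarrow> complex) c) = 1" using d by simp
  have "poly (map_poly of_int c) w = (\<Sum>i\<le>1. of_int (coeff c i) * w ^ i)"
    unfolding poly_altdef dm by (simp add: coeff_map_poly)
  hence e: "of_int (coeff c 0) + of_int (coeff c 1) * w = 0" using r by simp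
  have uu: "coeff c 1 * coeff c 1 = 1" using u d by (auto simp: zdvd1_eq abs_if split: if_splits)
  have "w = of_int (coeff c 1 * coeff c 1) * w" using uu by simp
  also have "\<dots> = of_int (coeff c 1) * (of_int (coeff c 1) * w)" by simp
  also have "of_int (coeff c 1) * w = - of_int (coeff c 0)" using e by (simp add: eq_neg_iff_add_eq_0 add.commute)
  finally have "w = of_int (- (coeff c 1 * coeff c 0))" by simp
  thus ?thesis by blast
qed


lemma main_abstract:
  fixes p q :: "int poly" and L :: "complex list" and k :: nat
  assumes pL: "map_poly of_int p = (\<Prod>a\<leftarrow>L. [:-a,1:])"
    and qL: "map_poly of_int q = (\<Prod>a\<leftarrow>L. [:-(a^k),1:])"
    and pr: "prod_list L = 1" and k: "k \<ge> 1" and lq: "lead_coeff q = 1"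
    and ni: "\<not> irreducible q"
  shows "imprimitive (root_slots p) (galois_perms p) \<or> cyclotomic_poly p"
proof (rule ccontr)
  assume H: "\<not> (imprimitive (root_slots p) (galois_perms p) \<or> cyclotomic_poly p)"
  hence nimp: "\<not> imprimitive (root_slots p) (galois_perms p)" and ncyc: "\<not> cyclotomic_poly p" by auto
  define \<Omega> where "\<Omega> = root_slots p"
  have OE: "\<Omega> = {(z,j). z \<in> set L \<and> j < count_list L z}" unfolding \<Omega>_def by (rule root_slots_eq[OF pL])
  have cr: "croots p = set L" unfolding croots_def pL poly_linear_prod_0 by simp
  note GP = gperm_props[OF pL, folded \<Omega>_def]
  have dich: "inj_on f \<Omega> \<or> (\<forall>x\<in>\<Omega>. \<forall>y\<in>\<Omega>. f x = f y)"
    if compat: "\<And>g. g \<in> galois_perms p \<Longrightarrow> (\<forall>x\<in>\<Omega>. \<forall>y\<in>\<Omega>. f (g x) = f (g y) \<longleftrightarrow> f x = f y)" for f :: "complex \<times> nat \<Rightarrow> 'b"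
  proof (rule ccontr)
    assume "\<not> (inj_on f \<Omega> \<or> (\<forall>x\<in>\<Omega>. \<forall>y\<in>\<Omega>. f x = f y))"
    then obtain x0 y0 where "\<not> inj_on f \<Omega>" "x0 \<in> \<Omega>" "y0 \<in> \<Omega>" "f x0 \<noteq> f y0" by blast
    from imprim_from_fun[of "galois_perms p" \<Omega> f, OF _ this] GP(1) compat nimp
    show False unfolding \<Omega>_def by blast
  qed
  have inO: "(z, 0) \<in> \<Omega>" if "z \<in> set L" for z
    unfolding OE using that count_list_0_iff[of L z] by auto
  have "cyclotomic_poly p"
  proof (cases "L = []")
    case True thus ?thesis unfolding cyclotomic_poly_def cr by simp
  next
    case Lne: False
    define n where "n = length L"
    have n0: "n > 0" using Lne unfolding n_def by simp
    have "inj_on snd \<Omega> \<or> (\<forall>x\<in>\<Omega>. \<forall>y\<in>\<Omega>. snd x = snd y)"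
      by (rule dich) (use GP(2) in auto)
    hence dist: "distinct L"
    proof
      assume inj: "inj_on snd \<Omega>"
      define z0 where "z0 = hd L"
      have z0: "z0 \<in> set L" unfolding z0_def using Lne by simp
      have allz: "\<forall>z\<in>set L. z = z0"
      proof
        fix z assume z: "z \<in> set L"
        from inj_onD[OF inj _ inO[OF z] inO[OF z0]] show "z = z0" by simp
      qed
      hence "L = replicate n z0" unfolding n_def using replicate_length_same[of L z0] by simp
      hence "z0 ^ n = 1" using pr by simp
      hence "cyclotomic_poly p" unfolding cyclotomic_poly_def cr using allz n0 by auto
      thus "distinct L" using ncyc by simp
    next
      assume c: "\<forall>x\<in>\<Omega>. \<forall>y\<in>\<Omega>. snd x = snd y"
      show "distinct L"
      proof (rule count_le1_distinct, rule ballI, rule ccontr)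
        fix z assume z: "z \<in> set L" "\<not> count_list L z \<le> 1"
        hence "(z, 1) \<in> \<Omega>" unfolding OE by auto
        from c[rule_format, OF this inO[OF z(1)]] show False by simp
      qed
    qed
    have OE2: "\<Omega> = (\<lambda>z. (z, 0)) ` set L"
      unfolding OE using distinct_count_eq1[OF dist] by auto
    have "inj_on (\<lambda>x. fst x ^ k) \<Omega> \<or> (\<forall>x\<in>\<Omega>. \<forall>y\<in>\<Omega>. fst x ^ k = fst y ^ k)"
      by (rule dich) (use GP(3) in auto)
    hence distk: "distinct (map (\<lambda>a. a ^ k) L)"
    proof
      assume inj: "inj_on (\<lambda>x. fst x ^ k) \<Omega>"
      have "inj_on (\<lambda>a. a ^ k) (set L)"
      proof (rule inj_onI)
        fix x y assume "x \<in> set L" "y \<in> set L" "x ^ k = y ^ k"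
        from inj_onD[OF inj _ inO[OF this(1)] inO[OF this(2)]] this(3) show "x = y" by simp
      qed
      thus ?thesis using dist by (simp add: distinct_map)
    next
      assume c: "\<forall>x\<in>\<Omega>. \<forall>y\<in>\<Omega>. fst x ^ k = fst y ^ k"
      define z0 where "z0 = hd L"
      have z0: "z0 \<in> set L" unfolding z0_def using Lne by simp
      have allz: "\<forall>z\<in>set L. z ^ k = z0 ^ k"
      proof
        fix z assume z: "z \<in> set L"
        from c[rule_format, OF inO[OF z] inO[OF z0]] show "z ^ k = z0 ^ k" by simp
      qed
      have "map (\<lambda>a. a ^ k) L = replicate n (z0 ^ k)"
        unfolding n_def using allz by (simp add: map_replicate_const[symmetric] cong: map_cong)
      hence "(z0 ^ k) ^ n = 1" using prod_list_pow[of k L] pr by simp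
      hence "\<forall>z\<in>set L. z ^ (k * n) = 1" using allz by (simp add: power_mult)
      moreover have "k * n > 0" using k n0 by simp
      ultimately have "cyclotomic_poly p" unfolding cyclotomic_poly_def cr by blast
      thus ?thesis using ncyc by simp
    qed
    have qC: "map_poly (of_int :: int \<Rightarrow> complex) q = (\<Prod>b\<leftarrow>map (\<lambda>a. a ^ k) L. [:-b,1:])"
      unfolding qL by (simp add: comp_def)
    have degq: "degree q = n"
    proof -
      have "degree (map_poly (of_int :: int \<Rightarrow> complex) q) = n"
        unfolding qL n_def using degree_linear_factors[of "\<lambda>a. -(a^k)" L] by simp
      thus ?thesis by simp
    qed
    have q0: "q \<noteq> 0" using lq by auto
    have qnu: "\<not> q dvd 1"
    proof
      assume "q dvd 1"
      then obtain c where "q = [:c:]" using is_unit_poly_iff by blast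
      hence "degree q = 0" by simp
      thus False using degq n0 by simp
    qed
    from ni q0 qnu obtain a b where qab: "q = a * b" and na: "\<not> a dvd 1" and nb: "\<not> b dvd 1"
      unfolding irreducible_def by blast
    have a0: "a \<noteq> 0" and b0: "b \<noteq> 0" using q0 qab by auto
    have lab: "lead_coeff a * lead_coeff b = 1" using lq qab by (simp add: lead_coeff_mult)
    have ua: "lead_coeff a dvd 1" and ub: "lead_coeff b dvd 1" using lab
      by (metis dvd_triv_left dvd_triv_right)+
    have da: "degree a \<ge> 1"
    proof (rule ccontr)
      assume "\<not> degree a \<ge> 1"
      hence "degree a = 0" by simp
      then obtain c where "a = [:c:]" using degree0_coeffs by blast
      hence "a = [:lead_coeff a:]" by simp
      hence "a dvd 1" using ua is_unit_const_poly_iff by metis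
      thus False using na by simp
    qed
    have db: "degree b \<ge> 1"
    proof (rule ccontr)
      assume "\<not> degree b \<ge> 1"
      hence "degree b = 0" by simp
      then obtain c where "b = [:c:]" using degree0_coeffs by blast
      hence "b = [:lead_coeff b:]" by simp
      hence "b dvd 1" using ub is_unit_const_poly_iff by metis
      thus False using nb by simp
    qed
    have degab: "degree a + degree b = n" using degq qab a0 b0 by (simp add: degree_mult_eq)
    define aC where "aC = map_poly (of_int :: int \<Rightarrow> complex) a"
    define bC where "bC = map_poly (of_int :: int \<Rightarrow> complex) b"
    have qCab: "map_poly (of_int :: int \<Rightarrow> complex) q = aC * bC"
      unfolding aC_def bC_def qab by (simp add: hom_distribs)
    have aC0: "aC \<noteq> 0" and bC0: "bC \<noteq> 0" unfolding aC_def bC_def using a0 b0 by auto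
    have rootq: "poly aC w = 0 \<or> poly bC w = 0 \<longleftrightarrow> (\<exists>z\<in>set L. w = z ^ k)" for w
    proof -
      have "poly aC w = 0 \<or> poly bC w = 0 \<longleftrightarrow> poly (map_poly of_int q) w = 0" unfolding qCab by simp
      also have "\<dots> \<longleftrightarrow> w \<in> set (map (\<lambda>a. a ^ k) L)" unfolding qC poly_linear_prod_0 ..
      finally show ?thesis by auto
    qed
    obtain wa where wa: "poly aC wa = 0"
      using fundamental_theorem_of_algebra[of aC] da unfolding aC_def by (auto simp: constant_degree)
    obtain wb where wb: "poly bC wb = 0"
      using fundamental_theorem_of_algebra[of bC] db unfolding bC_def by (auto simp: constant_degree)
    obtain za where za: "za \<in> set L" "wa = za ^ k" using rootq[of wa] wa by auto
    obtain zb where zb: "zb \<in> set L" "wb = zb ^ k" using rootq[of wb] wb by auto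
    have nab: "poly aC (zb ^ k) \<noteq> 0"
    proof
      assume h: "poly aC (zb ^ k) = 0"
      have "Polynomial.order (zb ^ k) (map_poly of_int q) = Polynomial.order (zb ^ k) aC + Polynomial.order (zb ^ k) bC"
        unfolding qCab using aC0 bC0 by (simp add: order_mult)
      moreover have "Polynomial.order (zb ^ k) aC > 0" using h aC0 order_gt_0_iff by blast
      moreover have "Polynomial.order (zb ^ k) bC > 0" using wb zb bC0 order_gt_0_iff by blast
      moreover have "Polynomial.order (zb ^ k) (map_poly of_int q) \<le> 1"
        unfolding qC order_linear_prod using distinct_count_le1[OF distk] by blast
      ultimately show False by linarith
    qed
    have "inj_on (\<lambda>x. poly aC (fst x ^ k) = 0) \<Omega> \<or> (\<forall>x\<in>\<Omega>. \<forall>y\<in>\<Omega>. (poly aC (fst x ^ k) = 0) = (poly aC (fst y ^ k) = 0))"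
      by (rule dich) (use GP(4) in \<open>auto simp: aC_def\<close>)
    moreover have "\<not> (\<forall>x\<in>\<Omega>. \<forall>y\<in>\<Omega>. (poly aC (fst x ^ k) = 0) = (poly aC (fst y ^ k) = 0))"
      using inO[OF za(1)] inO[OF zb(1)] wa za nab by fastforce
    ultimately have injb: "inj_on (\<lambda>x. poly aC (fst x ^ k) = 0) \<Omega>" by blast
    have "card \<Omega> \<le> card (UNIV :: bool set)"
      by (rule card_inj_on_le[OF injb]) auto
    moreover have "card \<Omega> = n" unfolding OE2 n_def
      by (simp add: card_image inj_on_def distinct_card[OF dist])
    ultimately have n2: "n \<le> 2" by simp
    have dega1: "degree a = 1" and degb1: "degree b = 1" using degab da db n2 by auto
    have intk: "\<exists>m::int. z ^ k = of_int m" if z: "z \<in> set L" for z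
    proof -
      have "poly aC (z ^ k) = 0 \<or> poly bC (z ^ k) = 0" using rootq z by blast
      thus ?thesis
        using int_root_linear[OF dega1 ua, of "z ^ k"] int_root_linear[OF degb1 ub, of "z ^ k"]
        unfolding aC_def bC_def by blast
    qed
    have "n = 2" using degab da db n2 by auto
    then obtain z1 z2 where L2: "L = [z1, z2]" unfolding n_def
    proof (cases L)
      case (Cons z1 r)
      assume h: "length L = 2" and th: "\<And>z1 z2. L = [z1, z2] \<Longrightarrow> thesis"
      show thesis
      proof (cases r)
        case (Cons z2 r')
        hence "r' = []" using h \<open>L = z1 # r\<close> by simp
        thus thesis using th Cons \<open>L = z1 # r\<close> by simp
      qed (use h \<open>L = z1 # r\<close> in simp)
    qed simp
    obtain m1 where m1: "z1 ^ k = of_int m1" using intk L2 by auto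
    obtain m2 where m2: "z2 ^ k = of_int m2" using intk L2 by auto
    have "(z1 * z2) ^ k = 1" using pr L2 by simp
    hence "of_int (m1 * m2) = (1::complex)" using m1 m2 by (simp add: power_mult_distrib)
    hence mm: "m1 * m2 = 1" by (metis of_int_eq_1_iff)
    hence "m1 * m1 = 1" "m2 * m2 = 1" by (auto simp: zmult_eq_1_iff)
    hence "z1 ^ (k * 2) = 1" "z2 ^ (k * 2) = 1" using m1 m2
      by (auto simp: power_mult power2_eq_square simp flip: of_int_mult)
    hence "\<forall>z\<in>set L. z ^ (k * 2) = 1" unfolding L2 by simp
    moreover have "k * 2 > 0" using k by simp
    ultimately have "cyclotomic_poly p" unfolding cyclotomic_poly_def cr by blast
    thus ?thesis using ncyc by simp
  qed
  thus False using ncyc by simp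
qed


theorem lemma8p3:
  fixes M :: "int mat" and n k :: nat
  assumes "M \<in> carrier_mat n n" and "det M = 1"
    and "k \<ge> 1" and "\<not> irreducible (char_poly (M ^\<^sub>m k))"
  shows "imprimitive (root_slots (char_poly M)) (galois_perms (char_poly M))
         \<or> cyclotomic_poly (char_poly M)"
proof -
  obtain L where pL: "map_poly (of_int :: int \<Rightarrow> complex) (char_poly M) = (\<Prod>a\<leftarrow>L. [:-a,1:])"
    and qL: "map_poly (of_int :: int \<Rightarrow> complex) (char_poly (M ^\<^sub>m k)) = (\<Prod>a\<leftarrow>L. [:-(a^k),1:])"
    and pr: "prod_list L = 1"
    using matrix_facts[OF assms(1,2), of k] by blast
  have Mk: "M ^\<^sub>m k \<in> carrier_mat n n" using assms(1) by simp
  have lq: "lead_coeff (char_poly (M ^\<^sub>m k)) = 1"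
    using degree_monic_char_poly[OF Mk] by simp
  show ?thesis by (rule main_abstract[OF pL qL pr assms(3) lq assms(4)])
qed

end
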